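(* Fix constants $\lambda_1,\ldots,\lambda_K\ge 0$ and $\mu_1,\ldots,\mu_M\ge 0$. For a channel realization $\boldsymbol{\alpha}$ consider the problem $$\max_{p_1,\ldots,p_K\ge 0}\ \log\Big(1+\sum_{k=1}^K h_kp_k\Big)-\sum_{k=1}^K\lambda_kp_k-\sum_{m=1}^M\mu_m\sum_{k=1}^K g_{km}p_k .$$ Then, for almost every realization $\boldsymbol{\alpha}$, any optimal solution $(p_1^*,\ldots,p_K^* )$ of this problem has at most one index $i\in\{1,\ldots,K\}$ with $p_i^*>0$.
   Context: $\boldsymbol{\alpha}=(h_1,\ldots,h_K,g_{11},\ldots,g_{KM})$ is a random vector of nonnegative channel power gains ($h_k$: secondary user $k$ to secondary base station; $g_{km}$: secondary user $k$ to primary receiver $m$) with a continuous, differentiable joint cumulative distribution function, the $h_k$'s and $g_{km}$'s being independent. "Almost every" refers to the distribution of $\boldsymbol{\alpha}$. *)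

theory Defs
  imports "HOL-Probability.Probability"
begin

text \<open>Channel realization: a vector indexed by 'k + ('k \<times> 'm).
  Coordinate Inl k is h_k (user k to base station),
  coordinate Inr (k,m) is g_km (user k to primary receiver m).\<close>

definition chan_h :: "real ^ ('k::finite + ('k \<times> 'm::finite)) \<Rightarrow> 'k \<Rightarrow> real" where
  "chan_h \<alpha> k = \<alpha> $ Inl k"

definition chan_g :: "real ^ ('k::finite + ('k \<times> 'm::finite)) \<Rightarrow> 'k \<Rightarrow> 'm \<Rightarrow> real" where
  "chan_g \<alpha> k m = \<alpha> $ Inr (k, m)"

definition objective ::
  "('k::finite \<Rightarrow> real) \<Rightarrow> ('m::finite \<Rightarrow> real) \<Rightarrow> real ^ ('k + ('k \<times> 'm)) \<Rightarrow> ('k \<Rightarrow> real) \<Rightarrow> real" where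
  "objective lam mu \<alpha> p =
     ln (1 + (\<Sum>k\<in>UNIV. chan_h \<alpha> k * p k))
     - (\<Sum>k\<in>UNIV. lam k * p k)
     - (\<Sum>m\<in>UNIV. mu m * (\<Sum>k\<in>UNIV. chan_g \<alpha> k m * p k))"

definition is_optimal ::
  "('k::finite \<Rightarrow> real) \<Rightarrow> ('m::finite \<Rightarrow> real) \<Rightarrow> real ^ ('k + ('k \<times> 'm)) \<Rightarrow> ('k \<Rightarrow> real) \<Rightarrow> bool" where
  "is_optimal lam mu \<alpha> p \<longleftrightarrow>
     (\<forall>k. p k \<ge> 0) \<and>
     (\<forall>q. (\<forall>k. q k \<ge> 0) \<longrightarrow> objective lam mu \<alpha> q \<le> objective lam mu \<alpha> p)"

definition joint_cdf :: "(real ^ 'n::finite) measure \<Rightarrow> real ^ 'n \<Rightarrow> real" where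
  "joint_cdf D x = measure D {y. \<forall>i. y $ i \<le> x $ i}"

end

theory Submission
  imports Defs
begin

lemma sum_shift:
  fixes f p :: "'k::finite \<Rightarrow> real"
  shows "(\<Sum>k\<in>UNIV. f k * (p k + (if k = i then t else 0))) = (\<Sum>k\<in>UNIV. f k * p k) + f i * t"
proof -
  have "(\<Sum>k\<in>UNIV. f k * (p k + (if k = i then t else 0))) = (\<Sum>k\<in>UNIV. f k * p k + (if k = i then f i * t else 0))"
    by (intro sum.cong) (auto simp: distrib_left)
  then show ?thesis by (simp add: sum.distrib)
qed

lemma obj_shift:
  fixes p :: "'k::finite \<Rightarrow> real" and \<alpha> :: "real ^ ('k + ('k \<times> 'm::finite))"
  shows "objective lam mu \<alpha> (\<lambda>k. p k + (if k = i then t else 0)) =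
    ln (1 + (\<Sum>k\<in>UNIV. chan_h \<alpha> k * p k) + chan_h \<alpha> i * t)
     - (\<Sum>k\<in>UNIV. lam k * p k)
     - (\<Sum>m\<in>UNIV. mu m * (\<Sum>k\<in>UNIV. chan_g \<alpha> k m * p k))
     - (lam i + (\<Sum>m\<in>UNIV. mu m * chan_g \<alpha> i m)) * t"
  unfolding objective_def sum_shift
  by (simp add: distrib_left sum.distrib algebra_simps sum_distrib_right sum_distrib_left)

lemma foc:
  fixes p :: "'k::finite \<Rightarrow> real" and \<alpha> :: "real ^ ('k + ('k \<times> 'm::finite))"
  assumes nonneg: "\<forall>l. \<alpha> $ l \<ge> 0" and opt: "is_optimal lam mu \<alpha> p" and pi: "p i > 0"
  shows "chan_h \<alpha> i = (lam i + (\<Sum>m\<in>UNIV. mu m * chan_g \<alpha> i m)) * (1 + (\<Sum>k\<in>UNIV. chan_h \<alpha> k * p k))"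
proof -
  define S where "S = (\<Sum>k\<in>UNIV. chan_h \<alpha> k * p k)"
  define c where "c = lam i + (\<Sum>m\<in>UNIV. mu m * chan_g \<alpha> i m)"
  define A where "A = (\<Sum>k\<in>UNIV. lam k * p k) + (\<Sum>m\<in>UNIV. mu m * (\<Sum>k\<in>UNIV. chan_g \<alpha> k m * p k))"
  have p0: "\<forall>k. p k \<ge> 0" using opt unfolding is_optimal_def by blast
  have h0: "\<forall>k. chan_h \<alpha> k \<ge> 0" using nonneg by (simp add: chan_h_def)
  have "chan_h \<alpha> i * p i \<le> S" unfolding S_def
    by (rule member_le_sum) (use p0 h0 in auto)
  then have Sge: "chan_h \<alpha> i * p i \<le> S" .
  define \<phi> where "\<phi> t = ln (1 + S + chan_h \<alpha> i * t) - A - c * t" for t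
  have phi: "\<phi> t = objective lam mu \<alpha> (\<lambda>k. p k + (if k = i then t else 0))" for t
    unfolding \<phi>_def obj_shift S_def A_def c_def by simp
  have pos: "1 + S + chan_h \<alpha> i * t > 0" if "\<bar>t\<bar> < p i" for t
  proof -
    have "chan_h \<alpha> i * (p i + t) \<ge> 0" using h0 that by simp
    then show ?thesis using Sge by (simp add: algebra_simps)
  qed
  have le: "\<forall>y. \<bar>0 - y\<bar> < p i \<longrightarrow> \<phi> y \<le> \<phi> 0"
  proof (intro allI impI)
    fix y assume "\<bar>0 - y\<bar> < p i"
    then have "\<forall>k. 0 \<le> p k + (if k = i then y else 0)" using p0 by auto
    then show "\<phi> y \<le> \<phi> 0" unfolding phi using opt unfolding is_optimal_def by simp
  qed
  have "(\<phi> has_real_derivative (chan_h \<alpha> i / (1 + S) - c)) (at 0)"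
    unfolding \<phi>_def
    using pos[of 0] pi
    by (auto intro!: derivative_eq_intros)
  from DERIV_local_max[OF this pi le] have "chan_h \<alpha> i / (1 + S) = c" by simp
  then show ?thesis using pos[of 0] pi unfolding S_def c_def by (simp add: field_simps)
qed


lemma meas_nth[measurable]: "(\<lambda>\<alpha>::real^'n::finite. \<alpha> $ i) \<in> borel_measurable borel"
  by (intro borel_measurable_continuous_onI continuous_on_component continuous_on_id)

lemma atomless:
  fixes D :: "(real ^ 'n::finite) measure"
  assumes prob: "prob_space D" and sets_D: "sets D = sets borel"
    and cdf_cont: "continuous_on UNIV (joint_cdf D)"
  shows "AE \<alpha> in D. \<alpha> $ l \<noteq> a"
proof -
  interpret prob_space D by (rule prob)
  have sp: "space D = UNIV" using sets_eq_imp_space_eq[OF sets_D] by simp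
  have mD: "(\<lambda>\<alpha>::real^'n. \<alpha> $ i) \<in> borel_measurable D" for i
    using measurable_cong_sets[OF sets_D refl] meas_nth by blast
  define C where "C y = {\<alpha>::real^'n. \<forall>i. \<alpha> $ i \<le> y $ i}" for y
  have CD: "C y \<in> sets D" for y
  proof -
    have "{\<alpha>\<in>space D. \<forall>i. \<alpha> $ i \<le> y $ i} \<in> sets D" using mD by measurable
    then show ?thesis unfolding C_def sp by simp
  qed
  have F: "joint_cdf D y = measure D (C y)" for y unfolding joint_cdf_def C_def ..
  define x :: "nat \<Rightarrow> real \<Rightarrow> real^'n" where "x t s = (\<chi> i. if i = l then s else real t)" for t s
  define E where "E t = {\<alpha>::real^'n. \<alpha> $ l = a \<and> (\<forall>i. i \<noteq> l \<longrightarrow> \<alpha> $ i \<le> real t)}" for t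
  have ED: "E t \<in> sets D" for t
  proof -
    have "{\<alpha>\<in>space D. \<alpha> $ l = a \<and> (\<forall>i. i \<noteq> l \<longrightarrow> \<alpha> $ i \<le> real t)} \<in> sets D" using mD by measurable
    then show ?thesis unfolding E_def sp by simp
  qed
  have Enull: "E t \<in> null_sets D" for t
  proof -
    define g where "g s = joint_cdf D (x t s)" for s
    have "continuous_on UNIV (\<lambda>s. x t s)" unfolding x_def by (intro continuous_on_vec_lambda) (case_tac "i = l", auto intro: continuous_intros)
    then have "continuous_on UNIV g" unfolding g_def
      using continuous_on_compose2[OF cdf_cont] by blast
    then have "isCont g a" by (simp add: continuous_on_eq_continuous_at)
    moreover have "(\<lambda>n. a - inverse (real (Suc n))) \<longlonglongrightarrow> a"
      using tendsto_diff[OF tendsto_const LIMSEQ_inverse_real_of_nat, of a] by simp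
    ultimately have "(\<lambda>n. g (a - inverse (real (Suc n)))) \<longlonglongrightarrow> g a"
      by (rule isCont_tendsto_compose)
    then have lim: "(\<lambda>n. g a - g (a - inverse (real (Suc n)))) \<longlonglongrightarrow> g a - g a"
      by (intro tendsto_intros)
    have bnd: "measure D (E t) \<le> g a - g (a - e)" if e: "e > 0" for e
    proof -
      have sub1: "C (x t (a - e)) \<subseteq> C (x t a)" unfolding C_def x_def using e by (smt (verit, best) mem_Collect_eq subsetI vec_lambda_beta)
      have sub2: "E t \<subseteq> C (x t a) - C (x t (a - e))"
        unfolding C_def x_def E_def using e by (auto simp: not_le intro!: exI[of _ l])
      have "measure D (E t) \<le> measure D (C (x t a) - C (x t (a - e)))"
        using sub2 CD by (intro finite_measure_mono) auto
      also have "\<dots> = g a - g (a - e)"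
        unfolding g_def F using finite_measure_Diff[OF CD CD sub1] by simp
      finally show ?thesis .
    qed
    have "measure D (E t) \<le> g a - g a"
      by (rule LIMSEQ_le_const[OF lim]) (auto intro!: bnd)
    then have "measure D (E t) = 0" using measure_nonneg[of D "E t"] by simp
    then show ?thesis using ED by (simp add: emeasure_eq_measure null_sets_def)
  qed
  show ?thesis
  proof (rule AE_I')
    show "(\<Union>t. E t) \<in> null_sets D" using Enull by blast
    show "{\<alpha> \<in> space D. \<not> \<alpha> $ l \<noteq> a} \<subseteq> (\<Union>t. E t)"
    proof
      fix \<alpha> :: "real^'n" assume "\<alpha> \<in> {\<alpha> \<in> space D. \<not> \<alpha> $ l \<noteq> a}"
      then have al: "\<alpha> $ l = a" by simp
      obtain t :: nat where t: "Max (range (\<lambda>i. \<bar>\<alpha> $ i\<bar>)) \<le> real t"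
        using real_arch_simple by blast
      have "\<alpha> $ i \<le> real t" for i
      proof -
        have "\<alpha> $ i \<le> \<bar>\<alpha> $ i\<bar>" by simp
        also have "\<dots> \<le> Max (range (\<lambda>i. \<bar>\<alpha> $ i\<bar>))" by (rule Max_ge) auto
        finally show ?thesis using t by linarith
      qed
      then have "\<alpha> \<in> E t" unfolding E_def using al by auto
      then show "\<alpha> \<in> (\<Union>t. E t)" by blast
    qed
  qed
qed


lemma indep_null:
  fixes D :: "(real ^ 'n::finite) measure" and f :: "real^'n \<Rightarrow> real"
  assumes prob: "prob_space D" and sets_D: "sets D = sets borel"
    and indep: "prob_space.indep_vars D (\<lambda>_. borel) (\<lambda>i \<alpha>. \<alpha> $ i) UNIV"
    and atom: "\<And>a. AE \<alpha> in D. \<alpha> $ l \<noteq> a"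
    and fm: "f \<in> borel_measurable borel"
    and fZ: "\<And>\<alpha>. f \<alpha> = f (\<chi> i. if i = l then 0 else \<alpha> $ i)"
  shows "AE \<alpha> in D. \<alpha> $ l \<noteq> f \<alpha>"
proof -
  interpret prob_space D by (rule prob)
  have sp: "space D = UNIV" using sets_eq_imp_space_eq[OF sets_D] by simp
  define Z :: "real^'n \<Rightarrow> real^'n" where "Z \<alpha> = (\<chi> i. if i = l then 0 else \<alpha> $ i)" for \<alpha>
  define X :: "real^'n \<Rightarrow> real^'n" where "X \<alpha> = (\<chi> i. \<alpha> $ l)" for \<alpha>
  define Y1 :: "('n \<Rightarrow> real) \<Rightarrow> real^'n" where "Y1 r = (\<chi> i. r l)" for r
  define Y2 :: "('n \<Rightarrow> real) \<Rightarrow> real^'n" where "Y2 r = (\<chi> i. if i = l then 0 else r i)" for r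
  have Y2m: "Y2 \<in> borel_measurable (PiM (-{l}) (\<lambda>_. borel))"
  proof (rule borel_measurable_euclidean_space[THEN iffD2], rule ballI)
    fix b :: "real^'n" assume "b \<in> Basis"
    then obtain i where b: "b = axis i 1" unfolding Basis_vec_def by auto
    have eq: "(\<lambda>r. Y2 r \<bullet> b) = (\<lambda>r. if i = l then 0 else r i)"
      unfolding b Y2_def by (simp add: inner_axis)
    show "(\<lambda>r. Y2 r \<bullet> b) \<in> borel_measurable (PiM (-{l}) (\<lambda>_. borel))"
      unfolding eq by (cases "i = l") (auto intro!: measurable_component_singleton)
  qed
  have Y1m: "Y1 \<in> borel_measurable (PiM {l} (\<lambda>_. borel))"
  proof (rule borel_measurable_euclidean_space[THEN iffD2], rule ballI)
    fix b :: "real^'n" assume "b \<in> Basis"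
    then obtain i where b: "b = axis i 1" unfolding Basis_vec_def by auto
    have eq: "(\<lambda>r. Y1 r \<bullet> b) = (\<lambda>r. r l)"
      unfolding b Y1_def by (simp add: inner_axis)
    show "(\<lambda>r. Y1 r \<bullet> b) \<in> borel_measurable (PiM {l} (\<lambda>_. borel))"
      unfolding eq by (auto intro!: measurable_component_singleton)
  qed
  have ind0: "indep_var (PiM (-{l}) (\<lambda>_. borel)) (\<lambda>\<alpha>. restrict (\<lambda>i. \<alpha> $ i) (-{l}))
      (PiM {l} (\<lambda>_. borel)) (\<lambda>\<alpha>. restrict (\<lambda>i. \<alpha> $ i) {l})"
    by (rule indep_var_restrict[OF indep]) auto
  have ind1: "indep_var borel (Y2 \<circ> (\<lambda>\<alpha>. restrict (\<lambda>i. \<alpha> $ i) (-{l})))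
       borel (Y1 \<circ> (\<lambda>\<alpha>. restrict (\<lambda>i. \<alpha> $ i) {l}))"
    by (rule indep_var_compose[OF ind0 Y2m Y1m])
  have e1: "Y2 \<circ> (\<lambda>\<alpha>. restrict (\<lambda>i. \<alpha> $ i) (-{l})) = Z"
    unfolding Y2_def Z_def by (auto simp: fun_eq_iff vec_eq_iff)
  have e2: "Y1 \<circ> (\<lambda>\<alpha>. restrict (\<lambda>i. \<alpha> $ i) {l}) = X"
    unfolding X_def Y1_def by (auto simp: fun_eq_iff)
  have ind: "indep_var borel Z borel X" using ind1 unfolding e1 e2 .
  from ind[unfolded indep_var_distribution_eq]
  have rZ: "random_variable borel Z" and rX: "random_variable borel X"
    and dist: "distr D borel Z \<Otimes>\<^sub>M distr D borel X = distr D (borel \<Otimes>\<^sub>M borel) (\<lambda>x. (Z x, X x))"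
    by auto
  define S where "S = {(z, x). x $ l = f z}"
  have Sm: "S \<in> sets (borel \<Otimes>\<^sub>M borel)"
  proof -
    have "{p \<in> space (borel \<Otimes>\<^sub>M borel). snd p $ l = f (fst p)} \<in> sets (borel \<Otimes>\<^sub>M borel)"
      using fm by measurable
    moreover have "{(z, x). x $ l = f z} = {p. snd p $ l = f (fst p)}" by auto
    ultimately show ?thesis unfolding S_def by (simp add: space_pair_measure)
  qed
  have N: "{\<alpha>. \<alpha> $ l = f \<alpha>} = (\<lambda>x. (Z x, X x)) -` S \<inter> space D"
  proof -
    have fZ': "f (Z \<alpha>) = f \<alpha>" for \<alpha> unfolding Z_def by (rule fZ[symmetric])
    show ?thesis unfolding S_def sp X_def by (auto simp: fZ')
  qed
  have rZX: "random_variable (borel \<Otimes>\<^sub>M borel) (\<lambda>x. (Z x, X x))"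
    using rZ rX by (rule measurable_Pair)
  have sf: "sigma_finite_measure (distr D borel X)"
    by (rule prob_space_imp_sigma_finite[OF prob_space_distr[OF rX]])
  have "emeasure D {\<alpha>. \<alpha> $ l = f \<alpha>} = emeasure (distr D (borel \<Otimes>\<^sub>M borel) (\<lambda>x. (Z x, X x))) S"
    unfolding N by (rule emeasure_distr[OF rZX Sm, symmetric])
  also have "\<dots> = emeasure (distr D borel Z \<Otimes>\<^sub>M distr D borel X) S" unfolding dist ..
  also have "\<dots> = (\<integral>\<^sup>+z. emeasure (distr D borel X) (Pair z -` S) \<partial>distr D borel Z)"
    by (rule sigma_finite_measure.emeasure_pair_measure_alt[OF sf]) (use Sm in simp)
  also have "\<dots> = (\<integral>\<^sup>+z. 0 \<partial>distr D borel Z)"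
  proof (rule nn_integral_cong)
    fix z
    have pz: "Pair z -` S = {v. v $ l = f z}" unfolding S_def by auto
    have "emeasure (distr D borel X) {v. v $ l = f z} = emeasure D (X -` {v. v $ l = f z} \<inter> space D)"
      by (rule emeasure_distr[OF rX]) (use meas_nth in measurable)
    also have "X -` {v. v $ l = f z} \<inter> space D = {\<alpha>. \<alpha> $ l = f z}" unfolding X_def sp by auto
    also have "emeasure D {\<alpha>. \<alpha> $ l = f z} = 0"
    proof -
      have m: "{\<alpha>. \<alpha> $ l = f z} \<in> sets D"
      proof -
        have mD: "(\<lambda>\<alpha>::real^'n. \<alpha> $ i) \<in> borel_measurable D" for i
          using measurable_cong_sets[OF sets_D refl] meas_nth by blast
        have "{\<alpha>\<in>space D. \<alpha> $ l = f z} \<in> sets D"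
          using mD by measurable
        then show ?thesis by (simp add: sp)
      qed
      show ?thesis using AE_iff_measurable[OF m, of "\<lambda>\<alpha>. \<alpha> $ l \<noteq> f z"] atom[of "f z"] sp by simp
    qed
    finally show "emeasure (distr D borel X) (Pair z -` S) = 0" unfolding pz .
  qed
  also have "\<dots> = 0" by simp
  finally have z: "emeasure D {\<alpha>. \<alpha> $ l = f \<alpha>} = 0" .
  have m: "{\<alpha>. \<alpha> $ l = f \<alpha>} \<in> sets D"
    using measurable_sets[OF rZX Sm] N by simp
  show ?thesis using AE_iff_measurable[OF m, of "\<lambda>\<alpha>. \<alpha> $ l \<noteq> f \<alpha>"] z sp by simp
qed

theorem lemma3p1:
  fixes D :: "(real ^ ('k::finite + ('k \<times> 'm::finite))) measure"
    and lam :: "'k \<Rightarrow> real" and mu :: "'m \<Rightarrow> real"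
  assumes lam_nonneg: "\<forall>k. lam k \<ge> 0"
    and mu_nonneg: "\<forall>m. mu m \<ge> 0"
    and prob: "prob_space D"
    and sets_D: "sets D = sets borel"
    and nonneg: "AE \<alpha> in D. \<forall>i. \<alpha> $ i \<ge> 0"
    and indep: "prob_space.indep_vars D (\<lambda>_. borel) (\<lambda>i \<alpha>. \<alpha> $ i) UNIV"
    and cdf_cont: "continuous_on UNIV (joint_cdf D)"
    and cdf_diff: "\<forall>x. joint_cdf D differentiable (at x)"
  shows "AE \<alpha> in D. \<forall>p. is_optimal lam mu \<alpha> p \<longrightarrow> card {i. p i > 0} \<le> 1"
proof -
  define c :: "real ^ ('k + ('k \<times> 'm)) \<Rightarrow> 'k \<Rightarrow> real"
    where "c \<alpha> i = lam i + (\<Sum>m\<in>UNIV. mu m * \<alpha> $ Inr (i, m))" for \<alpha> i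
  define f :: "'k \<Rightarrow> 'k \<Rightarrow> real ^ ('k + ('k \<times> 'm)) \<Rightarrow> real"
    where "f i j \<alpha> = \<alpha> $ Inl j * c \<alpha> i / c \<alpha> j" for i j \<alpha>
  have atom: "\<And>l a. AE \<alpha> in D. \<alpha> $ l \<noteq> a"
    by (rule atomless[OF prob sets_D cdf_cont])
  have G: "AE \<alpha> in D. \<forall>i\<in>UNIV. \<forall>j\<in>UNIV. i \<noteq> j \<longrightarrow> \<alpha> $ Inl j \<noteq> 0 \<and> \<alpha> $ Inl i \<noteq> f i j \<alpha>"
  proof (intro AE_finite_allI)
    fix i j :: 'k
    have fm: "f i j \<in> borel_measurable borel" unfolding f_def c_def by measurable
    have fZ: "f i j \<alpha> = f i j (\<chi> k. if k = Inl i then 0 else \<alpha> $ k)" if "i \<noteq> j" for \<alpha>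
      unfolding f_def c_def using that by simp
    show "AE \<alpha> in D. i \<noteq> j \<longrightarrow> \<alpha> $ Inl j \<noteq> 0 \<and> \<alpha> $ Inl i \<noteq> f i j \<alpha>"
    proof (cases "i = j")
      case True then show ?thesis by simp
    next
      case False
      have "AE \<alpha> in D. \<alpha> $ Inl i \<noteq> f i j \<alpha>"
        by (rule indep_null[OF prob sets_D indep atom fm fZ[OF False]])
      then show ?thesis using atom[of "Inl j" 0] by eventually_elim simp
    qed
  qed simp_all
  show ?thesis using G nonneg
  proof eventually_elim
    case (elim \<alpha>)
    show ?case
    proof (intro allI impI)
      fix p assume opt: "is_optimal lam mu \<alpha> p"
      have "\<forall>a\<in>{i. p i > 0}. \<forall>b\<in>{i. p i > 0}. a = b"
      proof (intro ballI, rule ccontr)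
        fix a b assume a: "a \<in> {i. p i > 0}" and b: "b \<in> {i. p i > 0}" and ab: "a \<noteq> b"
        define S where "S = (\<Sum>k\<in>UNIV. chan_h \<alpha> k * p k)"
        have ca: "\<alpha> $ Inl a = c \<alpha> a * (1 + S)"
          using foc[OF elim(2) opt, of a] a unfolding S_def c_def chan_h_def chan_g_def by simp
        have cb: "\<alpha> $ Inl b = c \<alpha> b * (1 + S)"
          using foc[OF elim(2) opt, of b] b unfolding S_def c_def chan_h_def chan_g_def by simp
        from elim(1) ab have hb: "\<alpha> $ Inl b \<noteq> 0" and ne: "\<alpha> $ Inl a \<noteq> f a b \<alpha>" by auto
        have cbn: "c \<alpha> b \<noteq> 0" using hb cb by auto
        have "f a b \<alpha> = \<alpha> $ Inl a" unfolding f_def using cbn ca cb by (simp add: field_simps)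
        with ne show False by simp
      qed
      then show "card {i. p i > 0} \<le> 1" using card_le_Suc0_iff_eq[of "{i. p i > 0}"] by simp
    qed
  qed
qed

end
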